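(* Let $k$ be a positive integer. Among all real numbers $1\ge a_1\ge a_2\ge\dots\ge a_k\ge0$ with $\sum_{i=1}^k a_i=1$, the value of \[\prod_{i=1}^k\frac{(1+a_i)^{1+a_i}}{a_i^{2a_i}}\] (with the convention $0^0=1$) is maximized when $a_i=\frac1k$ for all $i$. *)

theory Defs
  imports Complex_Main
begin

definition pow00 :: "real \<Rightarrow> real \<Rightarrow> real" where
  "pow00 x y = (if x = 0 \<and> y = 0 then 1 else x powr y)"

definition lem_factor :: "real \<Rightarrow> real" where
  "lem_factor a = pow00 (1 + a) (1 + a) / pow00 a (2 * a)"

end

theory Submission
  imports Defs "HOL-Analysis.Analysis"
begin

definition gg :: "real \<Rightarrow> real" where
  "gg y = (1 + y) * ln (1 + y) - 2 * y * ln y"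

lemma lem_factor_exp:
  assumes "y \<ge> 0" shows "lem_factor y = exp (gg y)"
proof (cases "y = 0")
  case True then show ?thesis by (simp add: lem_factor_def pow00_def gg_def)
next
  case False
  then have "y > 0" using assms by simp
  then show ?thesis
    by (simp add: lem_factor_def pow00_def gg_def powr_def exp_diff)
qed

lemma tangent:
  assumes c: "c > 0" and y: "y \<ge> 0"
  shows "gg y \<le> gg c - (2 * ln c - ln (1 + c) + 1) * (y - c)"
proof (cases "y = 0")
  case True
  have "ln (1 + c) \<ge> 0" using c by simp
  then show ?thesis using True c by (simp add: gg_def algebra_simps)
next
  case False
  then have yp: "y > 0" using y by simp
  let ?f = "\<lambda>x. - gg x"
  let ?f' = "\<lambda>x::real. 2 * ln x - ln (1 + x) + 1"
  let ?f'' = "\<lambda>x::real. 2 / x - 1 / (1 + x)"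
  have "?f' c * (y - c) \<le> ?f y - ?f c"
  proof (rule f''_imp_f'[where C="{0<..}" and f'' = ?f''])
    show "convex {0::real<..}" by simp
    fix x :: real assume "x \<in> {0<..}"
    then have x: "x > 0" by simp
    show "DERIV ?f x :> ?f' x"
      unfolding gg_def
      by (rule derivative_eq_intros refl | use x in simp)+
    show "DERIV ?f' x :> ?f'' x"
      by (rule derivative_eq_intros refl | use x in simp)+
    have "1 / (1 + x) \<le> 2 / x" using x by (simp add: field_simps)
    then show "?f'' x \<ge> 0" by simp
  qed (use c yp in auto)
  then show ?thesis by simp
qed

theorem lemma3p8:
  fixes k :: nat and a :: "nat \<Rightarrow> real"
  assumes "k \<ge> 1"
    and "a 1 \<le> 1"
    and "\<And>i. 1 \<le> i \<Longrightarrow> i < k \<Longrightarrow> a (i + 1) \<le> a i"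
    and "a k \<ge> 0"
    and "(\<Sum>i=1..k. a i) = 1"
  shows "(\<Prod>i=1..k. lem_factor (a i)) \<le> (\<Prod>i=1..k. lem_factor (1 / real k))"
proof -
  have dec: "d < k \<Longrightarrow> a (k - d) \<ge> a k" for d
  proof (induction d)
    case 0 then show ?case by simp
  next
    case (Suc d)
    have "a (k - Suc d + 1) \<le> a (k - Suc d)"
      using assms(3)[of "k - Suc d"] Suc.prems by simp
    moreover have "k - Suc d + 1 = k - d" using Suc.prems by simp
    ultimately show ?case using Suc by simp
  qed
  have nn: "a i \<ge> 0" if "i \<in> {1..k}" for i
  proof -
    have "a (k - (k - i)) \<ge> a k" using dec[of "k - i"] that by simp
    then show ?thesis using that assms(4) by simp
  qed
  define c where "c = 1 / real k"
  have cp: "c > 0" using assms(1) by (simp add: c_def)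
  define L where "L = 2 * ln c - ln (1 + c) + 1"
  have "(\<Sum>i=1..k. gg (a i)) \<le> (\<Sum>i=1..k. gg c - L * (a i - c))"
    by (rule sum_mono) (use tangent[OF cp] nn in \<open>simp add: L_def\<close>)
  also have "\<dots> = real k * gg c - L * ((\<Sum>i=1..k. a i) - real k * c)"
    by (simp add: sum_subtractf sum_distrib_left[symmetric] algebra_simps)
  also have "\<dots> = real k * gg c" using assms(1,5) by (simp add: c_def)
  finally have S: "(\<Sum>i=1..k. gg (a i)) \<le> real k * gg c" .
  have "(\<Prod>i=1..k. lem_factor (a i)) = exp (\<Sum>i=1..k. gg (a i))"
    by (simp add: exp_sum lem_factor_exp nn)
  also have "\<dots> \<le> exp (real k * gg c)" using S by simp
  also have "\<dots> = (\<Prod>i=1..k. lem_factor c)"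
    using cp by (simp add: lem_factor_exp exp_of_nat_mult)
  finally show ?thesis by (simp add: c_def)
qed

end
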